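(* For every $n\ge1$, the variety $\mathsf{PMV}_n=\mathbb{HSP}(\mathbf{P\L}_n)$ generated by $\mathbf{P\L}_n$ coincides with the quasi-variety $\mathbb{ISP}(\mathbf{P\L}_n)$ generated by $\mathbf{P\L}_n$. In other words, every member of $\mathsf{PMV}_n$ is isomorphic to a subalgebra of a (possibly empty) direct power of $\mathbf{P\L}_n$.
   Context: For $n\ge 1$, the algebra $\mathbf{P\L}_n=\langle\{0,\tfrac1n,\dots,\tfrac{n-1}{n},1\},\wedge,\vee,\odot,\oplus,0,1\rangle$ has $\wedge=\min$, $\vee=\max$, $x\odot y=\max\{0,x+y-1\}$ and $x\oplus y=\min\{1,x+y\}$. The variety it generates is denoted $\mathsf{PMV}_n$. *)

theory Defs
  imports Complex_Main "HOL-Library.FuncSet"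
begin

text \<open>Algebras in the signature (meet, join, strong conjunction, strong disjunction, 0, 1).
  The operations are total functions on the ambient type; only their behaviour on the
  carrier matters.\<close>
record 'a pmv_alg =
  pcar  :: "'a set"
  pmeet :: "'a \<Rightarrow> 'a \<Rightarrow> 'a"
  pjoin :: "'a \<Rightarrow> 'a \<Rightarrow> 'a"
  pmul  :: "'a \<Rightarrow> 'a \<Rightarrow> 'a"
  padd  :: "'a \<Rightarrow> 'a \<Rightarrow> 'a"
  pzero :: "'a"
  pone  :: "'a"

definition Ln :: "nat \<Rightarrow> real set" where
  "Ln n = {real k / real n | k. k \<le> n}"

definition PL :: "nat \<Rightarrow> real pmv_alg" where
  "PL n = \<lparr> pcar = Ln n, pmeet = min, pjoin = max,
            pmul = (\<lambda>x y. max 0 (x + y - 1)), padd = (\<lambda>x y. min 1 (x + y)),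
            pzero = 0, pone = 1 \<rparr>"

definition power_alg :: "'a pmv_alg \<Rightarrow> 'i set \<Rightarrow> ('i \<Rightarrow> 'a) pmv_alg" where
  "power_alg A I = \<lparr> pcar = I \<rightarrow>\<^sub>E pcar A,
      pmeet = (\<lambda>f g. restrict (\<lambda>i. pmeet A (f i) (g i)) I),
      pjoin = (\<lambda>f g. restrict (\<lambda>i. pjoin A (f i) (g i)) I),
      pmul  = (\<lambda>f g. restrict (\<lambda>i. pmul A (f i) (g i)) I),
      padd  = (\<lambda>f g. restrict (\<lambda>i. padd A (f i) (g i)) I),
      pzero = restrict (\<lambda>i. pzero A) I,
      pone  = restrict (\<lambda>i. pone A) I \<rparr>"

definition subuniverse :: "'a set \<Rightarrow> 'a pmv_alg \<Rightarrow> bool" where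
  "subuniverse B A \<longleftrightarrow> B \<subseteq> pcar A \<and> pzero A \<in> B \<and> pone A \<in> B \<and>
     (\<forall>x\<in>B. \<forall>y\<in>B. pmeet A x y \<in> B \<and> pjoin A x y \<in> B \<and> pmul A x y \<in> B \<and> padd A x y \<in> B)"

definition subalg :: "'a pmv_alg \<Rightarrow> 'a set \<Rightarrow> 'a pmv_alg" where
  "subalg A B = A\<lparr>pcar := B\<rparr>"

definition is_hom :: "'a pmv_alg \<Rightarrow> 'b pmv_alg \<Rightarrow> ('a \<Rightarrow> 'b) \<Rightarrow> bool" where
  "is_hom A C h \<longleftrightarrow> (\<forall>x\<in>pcar A. h x \<in> pcar C) \<and>
     h (pzero A) = pzero C \<and> h (pone A) = pone C \<and>
     (\<forall>x\<in>pcar A. \<forall>y\<in>pcar A.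
        h (pmeet A x y) = pmeet C (h x) (h y) \<and> h (pjoin A x y) = pjoin C (h x) (h y) \<and>
        h (pmul A x y) = pmul C (h x) (h y) \<and> h (padd A x y) = padd C (h x) (h y))"

text \<open>Witness that A lies in HSP(PL_n): A is the image of a surjective homomorphism h
  from the subalgebra with universe B of the direct power PL_n^I.\<close>
definition HSP_witness :: "nat \<Rightarrow> 'i set \<Rightarrow> ('i \<Rightarrow> real) set \<Rightarrow> (('i \<Rightarrow> real) \<Rightarrow> 'a)
                            \<Rightarrow> 'a pmv_alg \<Rightarrow> bool" where
  "HSP_witness n I B h A \<longleftrightarrow> subuniverse B (power_alg (PL n) I) \<and>
     is_hom (subalg (power_alg (PL n) I) B) A h \<and> h ` B = pcar A"

text \<open>A lies in ISP(PL_n): A embeds (injective homomorphism) into a direct power of PL_n.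
  The index set is taken in the type ('a => real) set, which suffices (e.g. the set of
  homomorphisms A -> PL_n).\<close>
definition in_ISP_PL :: "nat \<Rightarrow> 'a pmv_alg \<Rightarrow> bool" where
  "in_ISP_PL n A \<longleftrightarrow> (\<exists>(J :: ('a \<Rightarrow> real) set) e.
      is_hom A (power_alg (PL n) J) e \<and> inj_on e (pcar A))"

end

theory Submission
  imports Defs
begin



datatype ut = V | D ut | S ut

fun rv :: "ut \<Rightarrow> real \<Rightarrow> real" where
  "rv V x = x"
| "rv (D t) x = rv t (min 1 (x + x))"
| "rv (S t) x = rv t (max 0 (x + x - 1))"

fun av :: "'a pmv_alg \<Rightarrow> ut \<Rightarrow> 'a \<Rightarrow> 'a" where
  "av A V x = x"
| "av A (D t) x = av A t (padd A x x)"
| "av A (S t) x = av A t (pmul A x x)"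

lemma rv_Q: "\<And>c. 2^j * (1 - c) \<ge> (1::real) \<Longrightarrow> \<exists>t. \<forall>x. 0 \<le> x \<and> x \<le> 1 \<longrightarrow>
   (x \<le> c \<longrightarrow> rv t x = 0) \<and> rv t 1 = 1"
proof (induction j)
  case 0
  then show ?case by (intro exI[of _ V]) auto
next
  case (Suc j)
  define c' where "c' = max 0 (2*c - 1)"
  have "2^j * (1 - c') \<ge> 1"
  proof (cases "2*c - 1 \<le> 0")
    case True
    then show ?thesis unfolding c'_def by simp
  next
    case False
    then have "c' = 2*c-1" unfolding c'_def by simp
    then have "2^j*(1-c') = 2^Suc j*(1-c)" by (subst \<open>c' = 2*c-1\<close>) (simp add: algebra_simps)
    moreover have "(2::real)^Suc j*(1-c) \<ge> 1" using Suc.prems by blast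
    ultimately show ?thesis by linarith
  qed
  then obtain t where t: "\<forall>x. 0 \<le> x \<and> x \<le> 1 \<longrightarrow> (x \<le> c' \<longrightarrow> rv t x = 0) \<and> rv t 1 = 1"
    using Suc.IH by blast
  show ?case
  proof (intro exI[of _ "S t"] allI impI conjI)
    fix x :: real assume x: "0 \<le> x \<and> x \<le> 1" "x \<le> c"
    have "max 0 (x + x - 1) \<le> c'" using x unfolding c'_def by auto
    then show "rv (S t) x = 0" using t x by auto
  next
    show "rv (S t) 1 = 1" using t[rule_format, of 1] by simp
  qed
qed

lemma rv_R: "\<And>b a. 0 \<le> b \<Longrightarrow> b < a \<Longrightarrow> a \<le> 1 \<Longrightarrow> 2^N * (a - b) \<ge> (1::real) \<Longrightarrow>
   \<exists>t. \<forall>x. 0 \<le> x \<and> x \<le> 1 \<longrightarrow> (x \<le> b \<longrightarrow> rv t x = 0) \<and> (a \<le> x \<longrightarrow> rv t x = 1)"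
proof (induction N)
  case 0
  then have "b = 0" "a = 1" by auto
  then show ?case by (intro exI[of _ V]) auto
next
  case (Suc N)
  show ?case
  proof (cases "a \<le> 1/2")
    case True
    have "2^N * (2*a - 2*b) \<ge> 1" using Suc.prems by (simp add: algebra_simps)
    then obtain t where t: "\<forall>x. 0 \<le> x \<and> x \<le> 1 \<longrightarrow> (x \<le> 2*b \<longrightarrow> rv t x = 0) \<and> (2*a \<le> x \<longrightarrow> rv t x = 1)"
      using Suc.IH[of "2*b" "2*a"] Suc.prems True by auto
    show ?thesis
    proof (intro exI[of _ "D t"] allI impI conjI)
      fix x :: real assume x: "0 \<le> x \<and> x \<le> 1" "x \<le> b"
      then show "rv (D t) x = 0" using t True Suc.prems by auto
    next
      fix x :: real assume x: "0 \<le> x \<and> x \<le> 1" "a \<le> x"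
      have "2*a \<le> min 1 (x + x)" using x True by auto
      then show "rv (D t) x = 1" using t x by auto
    qed
  next
    case F1: False
    show ?thesis
    proof (cases "b \<ge> 1/2")
      case True
      have "2^N * ((2*a-1) - (2*b-1)) \<ge> 1" using Suc.prems by (simp add: algebra_simps)
      then obtain t where t: "\<forall>x. 0 \<le> x \<and> x \<le> 1 \<longrightarrow> (x \<le> 2*b-1 \<longrightarrow> rv t x = 0) \<and> (2*a-1 \<le> x \<longrightarrow> rv t x = 1)"
        using Suc.IH[of "2*b-1" "2*a-1"] Suc.prems True by auto
      show ?thesis
      proof (intro exI[of _ "S t"] allI impI conjI)
        fix x :: real assume x: "0 \<le> x \<and> x \<le> 1" "x \<le> b"
        have "max 0 (x + x - 1) \<le> 2*b-1" using x True by auto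
        then show "rv (S t) x = 0" using t x by auto
      next
        fix x :: real assume x: "0 \<le> x \<and> x \<le> 1" "a \<le> x"
        then show "rv (S t) x = 1" using t x Suc.prems by auto
      qed
    next
      case False
      have "1 - 2*b > 0" using False by auto
      then obtain j where j: "1/(1-2*b) < 2^j" using real_arch_pow[of "2::real"] by auto
      then have "2^j * (1 - 2*b) \<ge> 1" using \<open>1 - 2*b > 0\<close> by (simp add: field_simps)
      then obtain t where t: "\<forall>x. 0 \<le> x \<and> x \<le> 1 \<longrightarrow> (x \<le> 2*b \<longrightarrow> rv t x = 0) \<and> rv t 1 = 1"
        using rv_Q by blast
      show ?thesis
      proof (intro exI[of _ "D t"] allI impI conjI)
        fix x :: real assume x: "0 \<le> x \<and> x \<le> 1" "x \<le> b"
        then show "rv (D t) x = 0" using t False by auto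
      next
        fix x :: real assume x: "0 \<le> x \<and> x \<le> 1" "a \<le> x"
        have "min 1 (x + x) = 1" using x F1 by auto
        then show "rv (D t) x = 1" using t by auto
      qed
    qed
  qed
qed

lemma step_term:
  assumes "1 \<le> k" "k \<le> n"
  shows "\<exists>t. \<forall>q\<le>n. rv t (real q / real n) = (if k \<le> q then 1 else 0)"
proof -
  have n: "n \<ge> 1" using assms by simp
  have "real n < 2^n" by (metis of_nat_less_numeral_power_cancel_iff less_exp)
  then have "2^n * (real k / n - real (k-1) / n) \<ge> 1" using assms
    by (simp add: field_simps of_nat_diff)
  then obtain t where t: "\<forall>x. 0 \<le> x \<and> x \<le> 1 \<longrightarrow> (x \<le> real (k-1)/n \<longrightarrow> rv t x = 0) \<and> (real k/n \<le> x \<longrightarrow> rv t x = 1)"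
    using rv_R[of "real (k-1)/n" "real k / n" n] assms by (auto simp: field_simps of_nat_diff)
  show ?thesis
  proof (intro exI[of _ t] allI impI)
    fix q assume q: "q \<le> n"
    have x: "0 \<le> real q / n \<and> real q / n \<le> 1" using q n by auto
    show "rv t (real q / real n) = (if k \<le> q then 1 else 0)"
    proof (cases "k \<le> q")
      case True
      then have "real k / n \<le> real q / n" using n by (simp add: divide_right_mono)
      then show ?thesis using t x True by auto
    next
      case False
      then have "real q / n \<le> real (k-1) / n" using n by (simp add: divide_right_mono)
      then show ?thesis using t x False by auto
    qed
  qed
qed




locale setting =
  fixes n :: nat and I :: "'i set" and B :: "('i \<Rightarrow> real) set"
    and h :: "('i \<Rightarrow> real) \<Rightarrow> 'a" and A :: "'a pmv_alg"
  assumes n1: "1 \<le> n"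
    and sub: "subuniverse B (power_alg (PL n) I)"
    and hom: "is_hom (subalg (power_alg (PL n) I) B) A h"
    and surj: "h ` B = pcar A"
begin

definition addB :: "('i \<Rightarrow> real) \<Rightarrow> ('i \<Rightarrow> real) \<Rightarrow> ('i \<Rightarrow> real)" where
  "addB f g = restrict (\<lambda>i. min 1 (f i + g i)) I"
definition mulB :: "('i \<Rightarrow> real) \<Rightarrow> ('i \<Rightarrow> real) \<Rightarrow> ('i \<Rightarrow> real)" where
  "mulB f g = restrict (\<lambda>i. max 0 (f i + g i - 1)) I"
definition zB :: "'i \<Rightarrow> real" where "zB = restrict (\<lambda>i. 0) I"
definition oB :: "'i \<Rightarrow> real" where "oB = restrict (\<lambda>i. 1) I"

lemma B_ext: "b \<in> B \<Longrightarrow> b \<in> I \<rightarrow>\<^sub>E Ln n"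
  using sub unfolding subuniverse_def power_alg_def PL_def by auto

lemma B_extensional: "b \<in> B \<Longrightarrow> b \<in> extensional I"
  using B_ext[of b] by (simp add: PiE_iff)

lemma grid: "b \<in> B \<Longrightarrow> i \<in> I \<Longrightarrow> \<exists>q\<le>n. b i = real q / real n"
proof -
  assume "b \<in> B" "i \<in> I"
  then have "b i \<in> Ln n" using B_ext[of b] by (simp add: PiE_iff)
  then show ?thesis unfolding Ln_def by blast
qed

lemma grid_bounds: "b \<in> B \<Longrightarrow> i \<in> I \<Longrightarrow> 0 \<le> b i \<and> b i \<le> 1"
  using grid[of b i] n1 by auto

lemma ops_eq:
  assumes "b \<in> B" "c \<in> B"
  shows "pmeet (power_alg (PL n) I) b c = inf b c"
    "pjoin (power_alg (PL n) I) b c = sup b c"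
    "padd (power_alg (PL n) I) b c = addB b c"
    "pmul (power_alg (PL n) I) b c = mulB b c"
proof -
  have e: "b \<in> extensional I" "c \<in> extensional I" using assms B_extensional by auto
  show "pmeet (power_alg (PL n) I) b c = inf b c"
    using e by (auto simp: power_alg_def PL_def restrict_def extensional_def fun_eq_iff inf_min sup_max)
  show "pjoin (power_alg (PL n) I) b c = sup b c"
    using e by (auto simp: power_alg_def PL_def restrict_def extensional_def fun_eq_iff inf_min sup_max)
  show "padd (power_alg (PL n) I) b c = addB b c"
    by (auto simp: power_alg_def PL_def addB_def)
  show "pmul (power_alg (PL n) I) b c = mulB b c"
    by (auto simp: power_alg_def PL_def mulB_def)
qed

lemma zo_eq: "pzero (power_alg (PL n) I) = zB" "pone (power_alg (PL n) I) = oB"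
  by (auto simp: power_alg_def PL_def zB_def oB_def)

lemma closed:
  assumes "b \<in> B" "c \<in> B"
  shows "inf b c \<in> B" "sup b c \<in> B" "addB b c \<in> B" "mulB b c \<in> B"
  using sub assms ops_eq[OF assms] unfolding subuniverse_def by metis+

lemma closed0: "zB \<in> B" "oB \<in> B"
  using sub zo_eq unfolding subuniverse_def by metis+

lemma hom_eqs:
  assumes "b \<in> B" "c \<in> B"
  shows "h (inf b c) = pmeet A (h b) (h c)" "h (sup b c) = pjoin A (h b) (h c)"
    "h (addB b c) = padd A (h b) (h c)" "h (mulB b c) = pmul A (h b) (h c)"
proof -
  have "h (pmeet (power_alg (PL n) I) b c) = pmeet A (h b) (h c) \<and>
    h (pjoin (power_alg (PL n) I) b c) = pjoin A (h b) (h c) \<and>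
    h (pmul (power_alg (PL n) I) b c) = pmul A (h b) (h c) \<and>
    h (padd (power_alg (PL n) I) b c) = padd A (h b) (h c)"
    using hom assms unfolding is_hom_def subalg_def by simp
  then show "h (inf b c) = pmeet A (h b) (h c)" "h (sup b c) = pjoin A (h b) (h c)"
    "h (addB b c) = padd A (h b) (h c)" "h (mulB b c) = pmul A (h b) (h c)"
    unfolding ops_eq[OF assms] by auto
qed

lemma hom0: "h zB = pzero A" "h oB = pone A"
proof -
  have "h (pzero (power_alg (PL n) I)) = pzero A \<and> h (pone (power_alg (PL n) I)) = pone A"
    using hom unfolding is_hom_def subalg_def by simp
  then show "h zB = pzero A" "h oB = pone A" unfolding zo_eq by auto
qed

lemma eqI: "f \<in> B \<Longrightarrow> g \<in> B \<Longrightarrow> (\<And>i. i \<in> I \<Longrightarrow> f i = g i) \<Longrightarrow> f = g"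
  using B_extensional by (metis extensionalityI)

lemma leI: "f \<in> B \<Longrightarrow> g \<in> B \<Longrightarrow> (\<And>i. i \<in> I \<Longrightarrow> f i \<le> g i) \<Longrightarrow> f \<le> g"
proof (unfold le_fun_def, intro allI)
  fix x assume f: "f \<in> B" and g: "g \<in> B" and le: "\<And>i. i \<in> I \<Longrightarrow> f i \<le> g i"
  show "f x \<le> g x"
  proof (cases "x \<in> I")
    case True then show ?thesis using le by auto
  next
    case False then show ?thesis using B_extensional[OF f] B_extensional[OF g]
      unfolding extensional_def by auto
  qed
qed

definition bv :: "ut \<Rightarrow> ('i \<Rightarrow> real) \<Rightarrow> ('i \<Rightarrow> real)" where
  "bv t b = restrict (\<lambda>i. rv t (b i)) I"

lemma bv_lemma: "b \<in> B \<Longrightarrow> bv t b \<in> B \<and> h (bv t b) = av A t (h b)"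
proof (induction t arbitrary: b)
  case V
  then have "bv V b = b" using B_extensional[of b] by (auto simp: bv_def restrict_def extensional_def)
  then show ?case using V by simp
next
  case (D t)
  have "bv (D t) b = bv t (addB b b)" by (auto simp: bv_def addB_def restrict_def)
  then show ?case using D.IH[of "addB b b"] closed(3)[OF D.prems D.prems] hom_eqs(3)[OF D.prems D.prems] by simp
next
  case (S t)
  have "bv (S t) b = bv t (mulB b b)" by (auto simp: bv_def mulB_def restrict_def)
  then show ?case using S.IH[of "mulB b b"] closed(4)[OF S.prems S.prems] hom_eqs(4)[OF S.prems S.prems] by simp
qed

definition st :: "nat \<Rightarrow> real \<Rightarrow> real" where
  "st k x = (if real k \<le> real n * x then 1 else 0)"

definition Tb :: "nat \<Rightarrow> ('i \<Rightarrow> real) \<Rightarrow> ('i \<Rightarrow> real)" where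
  "Tb k b = restrict (\<lambda>i. st k (b i)) I"

lemma st_grid: "st k (real q / real n) = (if k \<le> q then 1 else 0)"
  using n1 by (simp add: st_def)

lemma Tb_lemma:
  assumes b: "b \<in> B"
  shows "Tb k b \<in> B \<and> (\<forall>b'\<in>B. h b' = h b \<longrightarrow> h (Tb k b') = h (Tb k b))"
proof (cases "k = 0")
  case True
  have "Tb k c = oB" if "c \<in> B" for c
    unfolding Tb_def oB_def
  proof (rule restrict_ext)
    fix i assume "i \<in> I"
    then have "0 \<le> c i" using grid_bounds[OF that] by blast
    then show "st k (c i) = 1" using True by (simp add: st_def)
  qed
  then show ?thesis using b closed0(2) by (intro conjI ballI impI) simp_all
next
  case k0: False
  show ?thesis
  proof (cases "n < k")
    case True
    have "Tb k c = zB" if "c \<in> B" for c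
    proof -
      have "\<not> real k \<le> real n * c i" if "i \<in> I" for i
      proof -
        have "real n * c i \<le> real n" using grid_bounds[OF \<open>c \<in> B\<close> that] by (simp add: mult_left_le)
        then show ?thesis using True by linarith
      qed
      then show ?thesis unfolding Tb_def zB_def st_def by (intro restrict_ext) simp
    qed
    then show ?thesis using b closed0(1) by (intro conjI ballI impI) simp_all
  next
    case False
    then obtain t where t: "\<forall>q\<le>n. rv t (real q / real n) = (if k \<le> q then 1 else 0)"
      using step_term[of k n] k0 by auto
    have "Tb k c = bv t c" if "c \<in> B" for c
    proof -
      have "st k (c i) = rv t (c i)" if iI: "i \<in> I" for i
      proof -
        obtain q where "q \<le> n" "c i = real q / real n" using grid[OF \<open>c \<in> B\<close> iI] by blast
        then show ?thesis using t st_grid by simp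
      qed
      then show ?thesis unfolding Tb_def bv_def by (intro restrict_ext) simp
    qed
    then show ?thesis using b
    proof (intro conjI ballI impI)
      fix b' assume b': "b' \<in> B" "h b' = h b"
      show "h (Tb k b') = h (Tb k b)" using b b' bv_lemma[of b t] bv_lemma[of b' t] \<open>\<And>c. c \<in> B \<Longrightarrow> Tb k c = bv t c\<close> by simp
    qed (use b bv_lemma[of b t] \<open>\<And>c. c \<in> B \<Longrightarrow> Tb k c = bv t c\<close> in simp)
  qed
qed

end



lemma grid_add: "(n::nat) \<ge> 1 \<Longrightarrow> min 1 (real q / real n + real r / real n) = real (min n (q+r)) / real n"
  by (auto simp: field_simps min_def)

lemma grid_mul: "(n::nat) \<ge> 1 \<Longrightarrow> max 0 (real q / real n + real r / real n - 1) = real (q + r - n) / real n"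
  by (auto simp: field_simps max_def of_nat_diff)

lemma grid_le: "(n::nat) \<ge> 1 \<Longrightarrow> (real q / real n \<le> real r / real n) = (q \<le> r)"
  by (auto simp: divide_right_mono field_simps)

context setting
begin

lemma Tb_at: "i \<in> I \<Longrightarrow> Tb k b i = st k (b i)"
  by (simp add: Tb_def)

lemma TbB: "b \<in> B \<Longrightarrow> Tb k b \<in> B"
  using Tb_lemma by blast

lemma Tb_cong: "b \<in> B \<Longrightarrow> b' \<in> B \<Longrightarrow> h b' = h b \<Longrightarrow> h (Tb k b') = h (Tb k b)"
  using Tb_lemma by blast

lemma ext_eqI: "f \<in> extensional I \<Longrightarrow> g \<in> extensional I \<Longrightarrow> (\<And>i. i \<in> I \<Longrightarrow> f i = g i) \<Longrightarrow> f = g"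
  by (metis extensionalityI)

lemma nmono: "x \<le> y \<Longrightarrow> real n * x \<le> real n * y" by (simp add: mult_left_mono)
lemma st_mono: "x \<le> y \<Longrightarrow> st k x \<le> st k y" using nmono[of x y] by (auto simp: st_def)
lemma st_min: "st k (min x y) = min (st k x) (st k y)"
  by (metis min.absorb1 min.absorb2 st_mono nle_le)
lemma st_max: "st k (max x y) = max (st k x) (st k y)"
  by (metis max.absorb1 max.absorb2 st_mono nle_le)

lemma Tb_inf: "b \<in> B \<Longrightarrow> c \<in> B \<Longrightarrow> Tb k (inf b c) = inf (Tb k b) (Tb k c)"
  by (rule eqI) (auto simp: TbB closed Tb_at st_min inf_min)

lemma Tb_sup: "b \<in> B \<Longrightarrow> c \<in> B \<Longrightarrow> Tb k (sup b c) = sup (Tb k b) (Tb k c)"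
  by (rule eqI) (auto simp: TbB closed Tb_at st_max sup_max)

lemma Tb_mono: "b \<in> B \<Longrightarrow> k \<le> k' \<Longrightarrow> Tb k' b \<le> Tb k b"
  by (rule leI) (auto simp: TbB Tb_at st_def)

lemma Tb0: "b \<in> B \<Longrightarrow> Tb 0 b = oB"
  by (rule eqI[OF TbB closed0(2)]) (auto simp: TbB closed0 Tb_at st_def oB_def dest: grid_bounds)

lemma Tb_big: "b \<in> B \<Longrightarrow> n < k \<Longrightarrow> Tb k b = zB"
proof (rule eqI)
  fix i assume b: "b \<in> B" and k: "n < k" and i: "i \<in> I"
  have "real n * b i \<le> real n" using grid_bounds[OF b i] by (simp add: mult_left_le)
  then show "Tb k b i = zB i" using k i by (auto simp: Tb_at st_def zB_def)
qed (auto simp: TbB closed0)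

lemma le_oB: "b \<in> B \<Longrightarrow> b \<le> oB"
  by (rule leI[OF _ closed0(2)]) (auto simp: closed0 oB_def dest: grid_bounds)

lemma ge_zB: "b \<in> B \<Longrightarrow> zB \<le> b"
  by (rule leI[OF closed0(1)]) (auto simp: closed0 zB_def dest: grid_bounds)

lemma add_lo: "b \<in> B \<Longrightarrow> c \<in> B \<Longrightarrow> inf (Tb i b) (Tb j c) \<le> Tb (min n (i+j)) (addB b c)"
proof (rule leI)
  fix x assume b: "b \<in> B" and c: "c \<in> B" and x: "x \<in> I"
  obtain q where q: "q \<le> n" "b x = real q / real n" using grid[OF b x] by blast
  obtain r where r: "r \<le> n" "c x = real r / real n" using grid[OF c x] by blast
  have a: "addB b c x = real (min n (q+r)) / real n" using x q r grid_add[OF n1] by (simp add: addB_def)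
  show "inf (Tb i b) (Tb j c) x \<le> Tb (min n (i+j)) (addB b c) x"
    using x by (auto simp: Tb_at a q r st_grid inf_min)
qed (auto simp: TbB closed)

lemma add_hi: "b \<in> B \<Longrightarrow> c \<in> B \<Longrightarrow> Tb (i+j+1) (addB b c) \<le> sup (Tb (i+1) b) (Tb (j+1) c)"
proof (rule leI)
  fix x assume b: "b \<in> B" and c: "c \<in> B" and x: "x \<in> I"
  obtain q where q: "q \<le> n" "b x = real q / real n" using grid[OF b x] by blast
  obtain r where r: "r \<le> n" "c x = real r / real n" using grid[OF c x] by blast
  have a: "addB b c x = real (min n (q+r)) / real n" using x q r grid_add[OF n1] by (simp add: addB_def)
  show "Tb (i+j+1) (addB b c) x \<le> sup (Tb (i+1) b) (Tb (j+1) c) x"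
    using x by (auto simp: Tb_at a q r st_grid sup_max)
qed (auto simp: TbB closed)

lemma mul_lo: "b \<in> B \<Longrightarrow> c \<in> B \<Longrightarrow> i \<le> n \<Longrightarrow> j \<le> n \<Longrightarrow> inf (Tb i b) (Tb j c) \<le> Tb (i+j-n) (mulB b c)"
proof (rule leI)
  fix x assume b: "b \<in> B" and c: "c \<in> B" and x: "x \<in> I" and ij: "i \<le> n" "j \<le> n"
  obtain q where q: "q \<le> n" "b x = real q / real n" using grid[OF b x] by blast
  obtain r where r: "r \<le> n" "c x = real r / real n" using grid[OF c x] by blast
  have a: "mulB b c x = real (q+r-n) / real n" using x q r grid_mul[OF n1] by (simp add: mulB_def)
  show "inf (Tb i b) (Tb j c) x \<le> Tb (i+j-n) (mulB b c) x"
    using x ij by (auto simp: Tb_at a q r st_grid inf_min)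
qed (auto simp: TbB closed)

lemma mul_hi: "b \<in> B \<Longrightarrow> c \<in> B \<Longrightarrow> Tb (i+j-n+1) (mulB b c) \<le> sup (Tb (i+1) b) (Tb (j+1) c)"
proof (rule leI)
  fix x assume b: "b \<in> B" and c: "c \<in> B" and x: "x \<in> I"
  obtain q where q: "q \<le> n" "b x = real q / real n" using grid[OF b x] by blast
  obtain r where r: "r \<le> n" "c x = real r / real n" using grid[OF c x] by blast
  have a: "mulB b c x = real (q+r-n) / real n" using x q r grid_mul[OF n1] by (simp add: mulB_def)
  show "Tb (i+j-n+1) (mulB b c) x \<le> sup (Tb (i+1) b) (Tb (j+1) c) x"
    using x by (auto simp: Tb_at a q r st_grid sup_max)
qed (auto simp: TbB closed)

end



context setting
begin

lemma hA_idem: "b \<in> B \<Longrightarrow> pmeet A (h b) (h b) = h b" "b \<in> B \<Longrightarrow> pjoin A (h b) (h b) = h b"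
  using hom_eqs(1,2)[of b b] by simp_all

lemma chain:
  assumes b1: "b1 \<in> B" and b2: "b2 \<in> B"
    and hk: "\<And>k. 1 \<le> k \<Longrightarrow> k \<le> n \<Longrightarrow> h (Tb k b1) = h (Tb k b2)"
  shows "h b1 = h b2"
proof -
  define u where "u = inf b1 b2"
  define v where "v = sup b1 b2"
  have uB: "u \<in> B" and vB: "v \<in> B" unfolding u_def v_def using closed b1 b2 by auto
  have huv: "h (Tb k u) = h (Tb k v)" for k
  proof (cases "1 \<le> k \<and> k \<le> n")
    case True
    have "h (Tb k u) = pmeet A (h (Tb k b1)) (h (Tb k b2))"
      unfolding u_def using Tb_inf[OF b1 b2] hom_eqs(1)[OF TbB[OF b1] TbB[OF b2]] by simp
    also have "\<dots> = h (Tb k b1)" using hk[of k] True hA_idem(1)[OF TbB[OF b2]] by simp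
    also have "\<dots> = pjoin A (h (Tb k b1)) (h (Tb k b2))" using hk[of k] True hA_idem(2)[OF TbB[OF b2]] by simp
    also have "\<dots> = h (Tb k v)"
      unfolding v_def using Tb_sup[OF b1 b2] hom_eqs(2)[OF TbB[OF b1] TbB[OF b2]] by simp
    finally show ?thesis .
  next
    case False
    then have "k = 0 \<or> n < k" by auto
    then show ?thesis using Tb0 Tb_big uB vB by auto
  qed
  have uv: "u \<le> v" unfolding u_def v_def by (simp add: le_supI1)
  define c where "c j = restrict (\<lambda>i. if real j \<le> real n * u i then v i else u i) I" for j
  have cext: "c j \<in> extensional I" for j unfolding c_def by simp
  have gi: "\<exists>q r. q \<le> r \<and> r \<le> n \<and> u i = real q / real n \<and> v i = real r / real n" if i: "i \<in> I" for i
  proof -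
    obtain q where q: "q \<le> n" "u i = real q / real n" using grid[OF uB i] by blast
    obtain r where r: "r \<le> n" "v i = real r / real n" using grid[OF vB i] by blast
    have "u i \<le> v i" using uv by (simp add: le_fun_def)
    then have "q \<le> r" using q r grid_le[OF n1] by simp
    then show ?thesis using q r by blast
  qed
  have nq: "real n * (real q / real n) = real q" for q using n1 by simp
  have cj: "c j \<in> B \<and> h (c j) = h v" for j
  proof (induction j)
    case 0
    have "c 0 = v"
    proof (rule ext_eqI[OF cext B_extensional[OF vB]])
      fix i assume i: "i \<in> I"
      then have "0 \<le> u i" using grid_bounds[OF uB i] by simp
      then show "c 0 i = v i" using i unfolding c_def by simp
    qed
    then show ?case using vB by simp
  next
    case (Suc j)
    have cB: "c j \<in> B" and hc: "h (c j) = h v" using Suc.IH by auto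
    have e1: "c (Suc j) = sup u (inf (c j) (Tb (Suc j) u))"
    proof (rule ext_eqI[OF cext B_extensional])
      show "sup u (inf (c j) (Tb (Suc j) u)) \<in> B" using closed uB cB TbB by auto
      fix i assume i: "i \<in> I"
      obtain q r where qr: "q \<le> r" "r \<le> n" "u i = real q / real n" "v i = real r / real n" using gi[OF i] by blast
      have "real q / real n \<le> real r / real n" using qr grid_le[OF n1] by simp
      moreover have "0 \<le> real q / real n" by simp
      ultimately show "c (Suc j) i = sup u (inf (c j) (Tb (Suc j) u)) i"
        using i qr unfolding c_def by (auto simp: Tb_at st_grid nq sup_max inf_min)
    qed
    have e2: "c j = sup u (inf (c j) (Tb (Suc j) v))"
    proof (rule ext_eqI[OF cext B_extensional])
      show "sup u (inf (c j) (Tb (Suc j) v)) \<in> B" using closed uB cB TbB vB by auto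
      fix i assume i: "i \<in> I"
      obtain q r where qr: "q \<le> r" "r \<le> n" "u i = real q / real n" "v i = real r / real n" using gi[OF i] by blast
      have "real q / real n \<le> real r / real n" using qr grid_le[OF n1] by simp
      moreover have "0 \<le> real q / real n" by simp
      moreover have "q = r \<or> q < r" using qr by auto
      ultimately show "c j i = sup u (inf (c j) (Tb (Suc j) v)) i"
        using i qr unfolding c_def by (auto simp: Tb_at st_grid nq sup_max inf_min)
    qed
    have "h (c (Suc j)) = pjoin A (h u) (pmeet A (h (c j)) (h (Tb (Suc j) u)))"
      unfolding e1 using hom_eqs closed uB cB TbB by simp
    also have "\<dots> = pjoin A (h u) (pmeet A (h (c j)) (h (Tb (Suc j) v)))" using huv by simp
    also have "\<dots> = h (sup u (inf (c j) (Tb (Suc j) v)))"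
      using hom_eqs closed uB cB TbB vB by simp
    also have "\<dots> = h (c j)" by (rule arg_cong[OF e2, symmetric])
    finally have "h (c (Suc j)) = h v" using hc by simp
    moreover have "c (Suc j) \<in> B" unfolding e1 by (rule closed(2)[OF uB closed(1)[OF cB TbB[OF uB]]])
    ultimately show ?case by simp
  qed
  have "c n = u"
  proof (rule ext_eqI[OF cext B_extensional[OF uB]])
    fix i assume i: "i \<in> I"
    obtain q r where qr: "q \<le> r" "r \<le> n" "u i = real q / real n" "v i = real r / real n" using gi[OF i] by blast
    show "c n i = u i" using i qr unfolding c_def by (auto simp: nq)
  qed
  then have hu: "h u = h v" using cj[of n] by simp
  have "h b1 = h (inf b1 v)" unfolding v_def by simp
  also have "\<dots> = pmeet A (h b1) (h u)" using hom_eqs(1)[OF b1 vB] hu by simp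
  also have "\<dots> = h (inf b1 u)" using hom_eqs(1)[OF b1 uB] by simp
  also have "\<dots> = h u" unfolding u_def by (simp add: inf.absorb2)
  finally have 1: "h b1 = h u" .
  have "h b2 = h (inf b2 v)" unfolding v_def by (simp add: inf.absorb1)
  also have "\<dots> = pmeet A (h b2) (h u)" using hom_eqs(1)[OF b2 vB] hu by simp
  also have "\<dots> = h (inf b2 u)" using hom_eqs(1)[OF b2 uB] by simp
  also have "\<dots> = h u" unfolding u_def by (simp add: inf.absorb2)
  finally show ?thesis using 1 by simp
qed

end



context setting
begin

definition sfilter :: "('i \<Rightarrow> real) set \<Rightarrow> bool" where
  "sfilter M \<longleftrightarrow> M \<subseteq> B \<and> (\<forall>x\<in>M. \<forall>y\<in>B. h y = h x \<longrightarrow> y \<in> M) \<and>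
     (\<forall>x\<in>M. \<forall>y\<in>B. x \<le> y \<longrightarrow> y \<in> M) \<and> (\<forall>x\<in>M. \<forall>y\<in>M. inf x y \<in> M)"

lemma sf_sub: "sfilter M \<Longrightarrow> x \<in> M \<Longrightarrow> x \<in> B" unfolding sfilter_def by blast
lemma sf_sat: "sfilter M \<Longrightarrow> x \<in> M \<Longrightarrow> y \<in> B \<Longrightarrow> h y = h x \<Longrightarrow> y \<in> M" unfolding sfilter_def by blast
lemma sf_up: "sfilter M \<Longrightarrow> x \<in> M \<Longrightarrow> y \<in> B \<Longrightarrow> x \<le> y \<Longrightarrow> y \<in> M" unfolding sfilter_def by blast
lemma sf_inf: "sfilter M \<Longrightarrow> x \<in> M \<Longrightarrow> y \<in> M \<Longrightarrow> inf x y \<in> M" unfolding sfilter_def by blast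

definition gen :: "('i \<Rightarrow> real) set \<Rightarrow> ('i \<Rightarrow> real) \<Rightarrow> ('i \<Rightarrow> real) set" where
  "gen SS z = {u \<in> B. \<exists>v\<in>SS. \<exists>u0\<in>B. h u0 = h u \<and> inf v z \<le> u0}"

lemma gen_sfilter:
  assumes S: "SS \<subseteq> B" "\<forall>x\<in>SS. \<forall>y\<in>SS. inf x y \<in> SS"
  shows "sfilter (gen SS z)"
  unfolding sfilter_def
proof (intro conjI ballI impI)
  show "gen SS z \<subseteq> B" unfolding gen_def by blast
next
  fix x y assume x: "x \<in> gen SS z" and y: "y \<in> B" and hyx: "h y = h x"
  from x obtain v u0 where v: "v \<in> SS" "u0 \<in> B" "h u0 = h x" "inf v z \<le> u0"
    unfolding gen_def by blast
  have "h u0 = h y" using v(3) hyx by simp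
  then show "y \<in> gen SS z" unfolding gen_def using y v(1,2,4) by blast
next
  fix x y assume x: "x \<in> gen SS z" and y: "y \<in> B" and xy: "x \<le> y"
  from x obtain v u0 where v: "v \<in> SS" "u0 \<in> B" "h u0 = h x" "inf v z \<le> u0" and xB: "x \<in> B"
    unfolding gen_def by blast
  have "h (sup u0 y) = pjoin A (h x) (h y)" using hom_eqs(2)[OF v(2) y] v(3) by simp
  also have "\<dots> = h (sup x y)" using hom_eqs(2)[OF xB y] by simp
  also have "\<dots> = h y" using xy by (simp add: sup.absorb2)
  finally have 1: "h (sup u0 y) = h y" .
  have 2: "inf v z \<le> sup u0 y" using v(4) by (simp add: le_supI1)
  have 3: "sup u0 y \<in> B" using closed(2)[OF v(2) y] .
  show "y \<in> gen SS z" unfolding gen_def using y v(1) 1 2 3 by blast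
next
  fix x y assume x: "x \<in> gen SS z" and y: "y \<in> gen SS z"
  from x obtain v u0 where v: "v \<in> SS" "u0 \<in> B" "h u0 = h x" "inf v z \<le> u0" and xB: "x \<in> B"
    unfolding gen_def by blast
  from y obtain v' u0' where v': "v' \<in> SS" "u0' \<in> B" "h u0' = h y" "inf v' z \<le> u0'" and yB: "y \<in> B"
    unfolding gen_def by blast
  have 1: "h (inf u0 u0') = h (inf x y)" using hom_eqs(1)[OF v(2) v'(2)] hom_eqs(1)[OF xB yB] v(3) v'(3) by simp
  have "inf (inf v v') z \<le> inf v z" by (simp add: inf.coboundedI1 inf_mono)
  moreover have "inf (inf v v') z \<le> inf v' z" by (simp add: inf.coboundedI1 inf_mono)
  ultimately have 2: "inf (inf v v') z \<le> inf u0 u0'" using v(4) v'(4) by (meson le_inf_iff order_trans)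
  have 3: "inf v v' \<in> SS" using S(2) v(1) v'(1) by blast
  have 4: "inf u0 u0' \<in> B" using closed(1)[OF v(2) v'(2)] .
  have 5: "inf x y \<in> B" using closed(1)[OF xB yB] .
  show "inf x y \<in> gen SS z" unfolding gen_def using 1 2 3 4 5 by blast
qed

lemma prime_filter:
  assumes b: "b \<in> B" and c: "c \<in> B" and bc: "h (sup b c) \<noteq> h c"
  shows "\<exists>M. sfilter M \<and> b \<in> M \<and> c \<notin> M \<and> (\<forall>x\<in>B. \<forall>y\<in>B. sup x y \<in> M \<longrightarrow> x \<in> M \<or> y \<in> M)"
proof -
  define Fam where "Fam = {M. sfilter M \<and> b \<in> M \<and> c \<notin> M}"
  have oBS: "{oB} \<subseteq> B" "\<forall>x\<in>{oB}. \<forall>y\<in>{oB}. inf x y \<in> {oB}" using closed0 by auto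
  have "gen {oB} b \<in> Fam"
  proof -
    have "inf oB b = b" using le_oB[OF b] by (simp add: inf.absorb2)
    then have "b \<in> gen {oB} b" unfolding gen_def using b by auto
    moreover have "c \<notin> gen {oB} b"
    proof
      assume "c \<in> gen {oB} b"
      then obtain u0 where u0: "u0 \<in> B" "h u0 = h c" "inf oB b \<le> u0" unfolding gen_def by auto
      then have "b \<le> u0" using \<open>inf oB b = b\<close> by simp
      have "h (sup b c) = pjoin A (h b) (h u0)" using hom_eqs(2)[OF b c] u0 by simp
      also have "\<dots> = h (sup b u0)" using hom_eqs(2)[OF b u0(1)] by simp
      also have "\<dots> = h c" using \<open>b \<le> u0\<close> u0 by (simp add: sup.absorb2)
      finally show False using bc by simp
    qed
    ultimately show ?thesis unfolding Fam_def using gen_sfilter[OF oBS] by blast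
  qed
  then have ne: "Fam \<noteq> {}" by auto
  have "\<exists>M\<in>Fam. \<forall>X\<in>Fam. M \<subseteq> X \<longrightarrow> X = M"
  proof (rule subset_Zorn_nonempty[OF ne])
    fix C assume Cne: "C \<noteq> {}" and ch: "subset.chain Fam C"
    then have CF: "C \<subseteq> Fam" and tot: "\<forall>X\<in>C. \<forall>Y\<in>C. X \<subseteq> Y \<or> Y \<subseteq> X"
      by (auto simp: subset_chain_def)
    have "sfilter (\<Union>C)" unfolding sfilter_def
    proof (intro conjI ballI impI)
      show "\<Union>C \<subseteq> B"
      proof
        fix x assume "x \<in> \<Union>C"
        then obtain X where "X \<in> C" "x \<in> X" by blast
        then show "x \<in> B" using CF sf_sub unfolding Fam_def by blast
      qed
    next
      fix x y assume "x \<in> \<Union>C" "y \<in> B" "h y = h x"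
      then obtain X where X: "X \<in> C" "x \<in> X" by blast
      then have "sfilter X" using CF unfolding Fam_def by blast
      then show "y \<in> \<Union>C" using sf_sat[of X x y] X \<open>y \<in> B\<close> \<open>h y = h x\<close> by blast
    next
      fix x y assume "x \<in> \<Union>C" "y \<in> B" "x \<le> y"
      then obtain X where X: "X \<in> C" "x \<in> X" by blast
      then have "sfilter X" using CF unfolding Fam_def by blast
      then show "y \<in> \<Union>C" using sf_up[of X x y] X \<open>y \<in> B\<close> \<open>x \<le> y\<close> by blast
    next
      fix x y assume x: "x \<in> \<Union>C" and y: "y \<in> \<Union>C"
      then obtain X Y where XY: "X \<in> C" "Y \<in> C" "x \<in> X" "y \<in> Y" by auto
      have sX: "sfilter X" and sY: "sfilter Y" using CF XY unfolding Fam_def by auto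
      have "X \<subseteq> Y \<or> Y \<subseteq> X" using tot XY by blast
      then show "inf x y \<in> \<Union>C"
      proof
        assume "X \<subseteq> Y"
        then have "inf x y \<in> Y" using sf_inf[OF sY] XY by blast
        then show ?thesis using XY by blast
      next
        assume "Y \<subseteq> X"
        then have "inf x y \<in> X" using sf_inf[OF sX] XY by blast
        then show ?thesis using XY by blast
      qed
    qed
    moreover have "b \<in> \<Union>C"
    proof -
      obtain X where "X \<in> C" using Cne by blast
      then show ?thesis using CF unfolding Fam_def by blast
    qed
    moreover have "c \<notin> \<Union>C" using CF unfolding Fam_def by blast
    ultimately show "\<Union>C \<in> Fam" unfolding Fam_def by auto
  qed
  then obtain M where MF: "M \<in> Fam" and max: "\<forall>X\<in>Fam. M \<subseteq> X \<longrightarrow> X = M" by blast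
  have sM: "sfilter M" and bM: "b \<in> M" and cM: "c \<notin> M" using MF unfolding Fam_def by auto
  have MB: "M \<subseteq> B" using sM sf_sub by blast
  have mc: "\<forall>x\<in>M. \<forall>y\<in>M. inf x y \<in> M" using sM sf_inf by blast
  have key: "c \<in> gen M x" if x: "x \<in> B" "x \<notin> M" for x
  proof (rule ccontr)
    assume nc: "c \<notin> gen M x"
    have gM: "sfilter (gen M x)" using gen_sfilter[of M x] MB mc by auto
    have "b \<in> gen M x" unfolding gen_def using bM b inf_le1[of b x] by blast
    then have "gen M x \<in> Fam" using gM nc unfolding Fam_def by auto
    moreover have "M \<subseteq> gen M x"
    proof
      fix u assume "u \<in> M"
      then show "u \<in> gen M x" unfolding gen_def using MB inf_le1[of u x] by blast
    qed
    ultimately have "gen M x = M" using max by auto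
    moreover have "x \<in> gen M x" unfolding gen_def using x bM inf_le2[of b x] by blast
    ultimately show False using x by auto
  qed
  have prime: "x \<in> M \<or> y \<in> M" if xy: "x \<in> B" "y \<in> B" "sup x y \<in> M" for x y
  proof (rule ccontr)
    assume "\<not> (x \<in> M \<or> y \<in> M)"
    then have nx: "x \<notin> M" and ny: "y \<notin> M" by auto
    obtain v1 u1 where 1: "v1 \<in> M" "u1 \<in> B" "h u1 = h c" "inf v1 x \<le> u1"
      using key[OF xy(1) nx] unfolding gen_def by auto
    obtain v2 u2 where 2: "v2 \<in> M" "u2 \<in> B" "h u2 = h c" "inf v2 y \<le> u2"
      using key[OF xy(2) ny] unfolding gen_def by auto
    have vM: "inf v1 v2 \<in> M" using sf_inf[OF sM 1(1) 2(1)] .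
    have wM: "inf (inf v1 v2) (sup x y) \<in> M" using sf_inf[OF sM vM xy(3)] .
    have "inf (inf v1 v2) (sup x y) = sup (inf (inf v1 v2) x) (inf (inf v1 v2) y)"
      by (rule inf_sup_distrib1)
    also have "\<dots> \<le> sup u1 u2"
    proof (rule sup_mono)
      show "inf (inf v1 v2) x \<le> u1" using 1(4) by (meson inf_le1 inf_mono order_refl order_trans)
      show "inf (inf v1 v2) y \<le> u2" using 2(4) by (meson inf_le2 inf_mono order_refl order_trans)
    qed
    finally have "sup u1 u2 \<in> M" using sf_up[OF sM wM closed(2)[OF 1(2) 2(2)]] by blast
    moreover have "h (sup u1 u2) = h c"
      using hom_eqs(2)[OF 1(2) 2(2)] 1 2 hom_eqs(2)[OF c c] by simp
    ultimately have "c \<in> M" using sf_sat[OF sM _ c, of "sup u1 u2"] by simp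
    then show False using cM by simp
  qed
  show ?thesis using sM bM cM prime by blast
qed

end



lemma nat_le_ext: "(\<And>k::nat. k \<le> x \<longleftrightarrow> k \<le> y) \<Longrightarrow> x = y"
  by (meson le_antisym order_refl)

context setting
begin

definition G :: "('i \<Rightarrow> real) set \<Rightarrow> ('i \<Rightarrow> real) \<Rightarrow> nat" where
  "G M b = Max {k. k \<le> n \<and> Tb k b \<in> M}"

definition PF :: "('i \<Rightarrow> real) set \<Rightarrow> bool" where
  "PF M \<longleftrightarrow> sfilter M \<and> oB \<in> M \<and> zB \<notin> M \<and> (\<forall>x\<in>B. \<forall>y\<in>B. sup x y \<in> M \<longrightarrow> x \<in> M \<or> y \<in> M)"

lemma G_char:
  assumes M: "PF M" and b: "b \<in> B"
  shows "(Tb k b \<in> M \<longleftrightarrow> k \<le> G M b) \<and> G M b \<le> n"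
proof -
  have sM: "sfilter M" and oM: "oB \<in> M" and zM: "zB \<notin> M" using M unfolding PF_def by auto
  define S where "S = {k. k \<le> n \<and> Tb k b \<in> M}"
  have fin: "finite S" unfolding S_def by (rule finite_subset[of _ "{..n}"]) auto
  have "0 \<in> S" unfolding S_def using Tb0[OF b] oM by simp
  then have ne: "S \<noteq> {}" by auto
  have mS: "G M b \<in> S" unfolding G_def S_def[symmetric] using Max_in[OF fin ne] .
  then have mn: "G M b \<le> n" and mM: "Tb (G M b) b \<in> M" unfolding S_def by auto
  have "Tb k b \<in> M \<longleftrightarrow> k \<le> G M b"
  proof
    assume kM: "Tb k b \<in> M"
    have "k \<le> n"
    proof (rule ccontr)
      assume "\<not> k \<le> n"
      then have "Tb k b = zB" using Tb_big[OF b] by simp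
      then show False using kM zM by simp
    qed
    then have "k \<in> S" unfolding S_def using kM by simp
    then show "k \<le> G M b" unfolding G_def S_def[symmetric] using Max_ge[OF fin] by blast
  next
    assume "k \<le> G M b"
    then have "Tb (G M b) b \<le> Tb k b" using Tb_mono[OF b] by blast
    then show "Tb k b \<in> M" using sf_up[OF sM mM TbB[OF b]] by blast
  qed
  then show ?thesis using mn by blast
qed

lemma G_cong:
  assumes M: "PF M" and b: "b \<in> B" and c: "c \<in> B" and hbc: "h b = h c"
  shows "G M b = G M c"
proof (rule nat_le_ext)
  fix k
  have sM: "sfilter M" using M unfolding PF_def by auto
  have "Tb k b \<in> M \<longleftrightarrow> Tb k c \<in> M"
    using Tb_cong[OF b c hbc[symmetric], of k] Tb_cong[OF c b hbc, of k] sf_sat[OF sM] TbB b c by metis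
  then show "k \<le> G M b \<longleftrightarrow> k \<le> G M c" using G_char[OF M b, of k] G_char[OF M c, of k] by simp
qed

definition gf :: "('i \<Rightarrow> real) set \<Rightarrow> 'a \<Rightarrow> real" where
  "gf M a = real (G M (SOME b. b \<in> B \<and> h b = a)) / real n"

lemma gf_h:
  assumes M: "PF M" and b: "b \<in> B"
  shows "gf M (h b) = real (G M b) / real n"
proof -
  have "\<exists>b'. b' \<in> B \<and> h b' = h b" using b by blast
  then have "(SOME b'. b' \<in> B \<and> h b' = h b) \<in> B \<and> h (SOME b'. b' \<in> B \<and> h b' = h b) = h b"
    by (rule someI_ex)
  then show ?thesis unfolding gf_def using G_cong[OF M _ b] by auto
qed

lemma G_inf:
  assumes M: "PF M" and b: "b \<in> B" and c: "c \<in> B"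
  shows "G M (inf b c) = min (G M b) (G M c)"
proof (rule nat_le_ext)
  fix k
  have sM: "sfilter M" using M unfolding PF_def by auto
  have "Tb k (inf b c) \<in> M \<longleftrightarrow> Tb k b \<in> M \<and> Tb k c \<in> M"
    unfolding Tb_inf[OF b c]
    using sf_inf[OF sM] sf_up[OF sM _ TbB[OF b]] sf_up[OF sM _ TbB[OF c]] inf_le1 inf_le2 by metis
  then show "k \<le> G M (inf b c) \<longleftrightarrow> k \<le> min (G M b) (G M c)"
    using G_char[OF M b, of k] G_char[OF M c, of k] G_char[OF M closed(1)[OF b c], of k] by simp
qed

lemma G_sup:
  assumes M: "PF M" and b: "b \<in> B" and c: "c \<in> B"
  shows "G M (sup b c) = max (G M b) (G M c)"
proof (rule nat_le_ext)
  fix k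
  have sM: "sfilter M" and pr: "\<forall>x\<in>B. \<forall>y\<in>B. sup x y \<in> M \<longrightarrow> x \<in> M \<or> y \<in> M" using M unfolding PF_def by auto
  have "Tb k (sup b c) \<in> M \<longleftrightarrow> Tb k b \<in> M \<or> Tb k c \<in> M"
    unfolding Tb_sup[OF b c]
    using pr TbB[OF b] TbB[OF c] sf_up[OF sM _ closed(2)[OF TbB[OF b] TbB[OF c]]] sup_ge1 sup_ge2 by metis
  then show "k \<le> G M (sup b c) \<longleftrightarrow> k \<le> max (G M b) (G M c)"
    using G_char[OF M b, of k] G_char[OF M c, of k] G_char[OF M closed(2)[OF b c], of k] by auto
qed

lemma G_add:
  assumes M: "PF M" and b: "b \<in> B" and c: "c \<in> B"
  shows "G M (addB b c) = min n (G M b + G M c)"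
proof -
  have sM: "sfilter M" and pr: "\<forall>x\<in>B. \<forall>y\<in>B. sup x y \<in> M \<longrightarrow> x \<in> M \<or> y \<in> M" using M unfolding PF_def by auto
  define i where "i = G M b"
  define j where "j = G M c"
  have ab: "addB b c \<in> B" using closed(3)[OF b c] .
  have iM: "Tb i b \<in> M" and jM: "Tb j c \<in> M" using G_char[OF M b] G_char[OF M c] unfolding i_def j_def by auto
  have "Tb (min n (i+j)) (addB b c) \<in> M"
    using sf_up[OF sM sf_inf[OF sM iM jM] TbB[OF ab] add_lo[OF b c]] .
  then have lo: "min n (i+j) \<le> G M (addB b c)" using G_char[OF M ab] by blast
  have hi: "G M (addB b c) \<le> i + j"
  proof (rule ccontr)
    assume "\<not> G M (addB b c) \<le> i + j"
    then have "Tb (i+j+1) (addB b c) \<in> M" using G_char[OF M ab] by simp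
    then have "sup (Tb (i+1) b) (Tb (j+1) c) \<in> M"
      using sf_up[OF sM _ closed(2)[OF TbB[OF b] TbB[OF c]] add_hi[OF b c]] by blast
    then have "Tb (i+1) b \<in> M \<or> Tb (j+1) c \<in> M" using pr TbB[OF b] TbB[OF c] by blast
    then show False using G_char[OF M b, of "i+1"] G_char[OF M c, of "j+1"] unfolding i_def j_def by auto
  qed
  have "G M (addB b c) \<le> n" using G_char[OF M ab, of 0] by blast
  then show ?thesis using lo hi unfolding i_def j_def by linarith
qed

lemma G_mul:
  assumes M: "PF M" and b: "b \<in> B" and c: "c \<in> B"
  shows "G M (mulB b c) = G M b + G M c - n"
proof -
  have sM: "sfilter M" and pr: "\<forall>x\<in>B. \<forall>y\<in>B. sup x y \<in> M \<longrightarrow> x \<in> M \<or> y \<in> M" using M unfolding PF_def by auto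
  define i where "i = G M b"
  define j where "j = G M c"
  have ab: "mulB b c \<in> B" using closed(4)[OF b c] .
  have iM: "Tb i b \<in> M" and jM: "Tb j c \<in> M" and "i \<le> n" "j \<le> n"
    using G_char[OF M b] G_char[OF M c] unfolding i_def j_def by auto
  have "Tb (i+j-n) (mulB b c) \<in> M"
    using sf_up[OF sM sf_inf[OF sM iM jM] TbB[OF ab] mul_lo[OF b c \<open>i \<le> n\<close> \<open>j \<le> n\<close>]] .
  then have lo: "i+j-n \<le> G M (mulB b c)" using G_char[OF M ab] by blast
  have hi: "G M (mulB b c) \<le> i + j - n"
  proof (rule ccontr)
    assume "\<not> G M (mulB b c) \<le> i + j - n"
    then have "Tb (i+j-n+1) (mulB b c) \<in> M" using G_char[OF M ab] by simp
    then have "sup (Tb (i+1) b) (Tb (j+1) c) \<in> M"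
      using sf_up[OF sM _ closed(2)[OF TbB[OF b] TbB[OF c]] mul_hi[OF b c]] by blast
    then have "Tb (i+1) b \<in> M \<or> Tb (j+1) c \<in> M" using pr TbB[OF b] TbB[OF c] by blast
    then show False using G_char[OF M b, of "i+1"] G_char[OF M c, of "j+1"] unfolding i_def j_def by auto
  qed
  show ?thesis using lo hi unfolding i_def j_def by auto
qed

lemma G_zero:
  assumes M: "PF M" shows "G M zB = 0"
proof -
  have "Tb 1 zB = zB"
    by (rule eqI[OF TbB[OF closed0(1)] closed0(1)]) (simp add: Tb_at st_def zB_def)
  then have "\<not> 1 \<le> G M zB" using G_char[OF M closed0(1), of 1] M unfolding PF_def by auto
  then show ?thesis by simp
qed

lemma G_one:
  assumes M: "PF M" shows "G M oB = n"
proof -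
  have "Tb n oB = oB"
    by (rule eqI[OF TbB[OF closed0(2)] closed0(2)]) (simp add: Tb_at st_def oB_def)
  then have "n \<le> G M oB" using G_char[OF M closed0(2), of n] M unfolding PF_def by auto
  then show ?thesis using G_char[OF M closed0(2)] by (meson le_antisym)
qed

lemma min_div: "real (min a b) / real n = min (real a / real n) (real b / real n)"
  using grid_le[OF n1, of a b] grid_le[OF n1, of b a] by (auto simp: min_def)
lemma max_div: "real (max a b) / real n = max (real a / real n) (real b / real n)"
  using grid_le[OF n1, of a b] grid_le[OF n1, of b a] by (auto simp: max_def)

lemma gf_hom:
  assumes M: "PF M"
  shows "is_hom A (PL n) (gf M)"
  unfolding is_hom_def
proof (intro conjI ballI)
  fix x assume "x \<in> pcar A"
  then obtain b where b: "b \<in> B" "x = h b" using surj by blast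
  show "gf M x \<in> pcar (PL n)" using gf_h[OF M b(1)] G_char[OF M b(1)] b(2)
    unfolding PL_def Ln_def by auto
next
  show "gf M (pzero A) = pzero (PL n)"
    using gf_h[OF M closed0(1)] G_zero[OF M] hom0 by (simp add: PL_def)
next
  show "gf M (pone A) = pone (PL n)"
    using gf_h[OF M closed0(2)] G_one[OF M] hom0 n1 by (simp add: PL_def)
next
  fix x y assume "x \<in> pcar A" "y \<in> pcar A"
  then obtain b c where b: "b \<in> B" "x = h b" and c: "c \<in> B" "y = h c" using surj by blast
  show "gf M (pmeet A x y) = pmeet (PL n) (gf M x) (gf M y)"
    using b c hom_eqs(1)[OF b(1) c(1), symmetric] gf_h[OF M] G_inf[OF M b(1) c(1)] closed(1)[OF b(1) c(1)] min_div
    by (simp add: PL_def)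
  show "gf M (pjoin A x y) = pjoin (PL n) (gf M x) (gf M y)"
    using b c hom_eqs(2)[OF b(1) c(1), symmetric] gf_h[OF M] G_sup[OF M b(1) c(1)] closed(2)[OF b(1) c(1)] max_div
    by (simp add: PL_def)
  show "gf M (pmul A x y) = pmul (PL n) (gf M x) (gf M y)"
    using b c hom_eqs(4)[OF b(1) c(1), symmetric] gf_h[OF M] G_mul[OF M b(1) c(1)] closed(4)[OF b(1) c(1)] grid_mul[OF n1]
    by (simp add: PL_def)
  show "gf M (padd A x y) = padd (PL n) (gf M x) (gf M y)"
    using b c hom_eqs(3)[OF b(1) c(1), symmetric] gf_h[OF M] G_add[OF M b(1) c(1)] closed(3)[OF b(1) c(1)] grid_add[OF n1]
    by (simp add: PL_def)
qed

lemma sep_aux: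
  assumes b1: "b1 \<in> B" and b2: "b2 \<in> B"
    and ne: "h (sup (Tb k b1) (Tb k b2)) \<noteq> h (Tb k b2)"
  shows "\<exists>g. is_hom A (PL n) g \<and> g (h b1) \<noteq> g (h b2)"
proof -
  obtain M where M: "sfilter M" "Tb k b1 \<in> M" "Tb k b2 \<notin> M"
    "\<forall>x\<in>B. \<forall>y\<in>B. sup x y \<in> M \<longrightarrow> x \<in> M \<or> y \<in> M"
    using prime_filter[OF TbB[OF b1] TbB[OF b2] ne] by blast
  have "oB \<in> M" using sf_up[OF M(1) M(2) closed0(2) le_oB[OF TbB[OF b1]]] .
  moreover have "zB \<notin> M"
  proof
    assume "zB \<in> M"
    then have "Tb k b2 \<in> M" using sf_up[OF M(1) _ TbB[OF b2] ge_zB[OF TbB[OF b2]]] by blast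
    then show False using M(3) by simp
  qed
  ultimately have PM: "PF M" using M unfolding PF_def by blast
  have "k \<le> G M b1" "\<not> k \<le> G M b2" using G_char[OF PM b1, of k] G_char[OF PM b2, of k] M by auto
  then have "G M b1 \<noteq> G M b2" by auto
  then have "gf M (h b1) \<noteq> gf M (h b2)" using gf_h[OF PM b1] gf_h[OF PM b2] n1 by simp
  then show ?thesis using gf_hom[OF PM] by blast
qed

lemma separation:
  assumes x: "x \<in> pcar A" and y: "y \<in> pcar A" and xy: "x \<noteq> y"
  shows "\<exists>g. is_hom A (PL n) g \<and> g x \<noteq> g y"
proof -
  obtain b1 b2 where b: "b1 \<in> B" "x = h b1" "b2 \<in> B" "y = h b2" using x y surj by blast
  obtain k where k: "h (Tb k b1) \<noteq> h (Tb k b2)" using chain[OF b(1) b(3)] b xy by blast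
  show ?thesis
  proof (cases "h (sup (Tb k b1) (Tb k b2)) = h (Tb k b2)")
    case False
    then show ?thesis using sep_aux[OF b(1) b(3) False] b by simp
  next
    case True
    then have "h (sup (Tb k b2) (Tb k b1)) \<noteq> h (Tb k b1)" using k by (simp add: sup_commute)
    then obtain g where "is_hom A (PL n) g" "g (h b2) \<noteq> g (h b1)" using sep_aux[OF b(3) b(1)] by blast
    then show ?thesis using b by metis
  qed
qed

end



theorem corollary3p6:
  fixes n :: nat and I :: "'i set" and B :: "('i \<Rightarrow> real) set"
    and h :: "('i \<Rightarrow> real) \<Rightarrow> 'a" and A :: "'a pmv_alg"
  assumes "n \<ge> 1"
    and "HSP_witness n I B h A"
  shows "in_ISP_PL n A"
proof -
  interpret setting n I B h A
    using assms unfolding HSP_witness_def by unfold_locales auto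
  define J where "J = {g. is_hom A (PL n) g}"
  define e where "e a = restrict (\<lambda>g. g a) J" for a
  have eg: "e a g = g a" if "g \<in> J" for a g using that unfolding e_def by simp
  have gJ: "is_hom A (PL n) g" if "g \<in> J" for g using that unfolding J_def by simp
  have "is_hom A (power_alg (PL n) J) e"
    unfolding is_hom_def
  proof (intro conjI ballI)
    fix x assume x: "x \<in> pcar A"
    show "e x \<in> pcar (power_alg (PL n) J)"
      unfolding power_alg_def using x gJ unfolding is_hom_def
      by (auto simp: e_def PL_def)
  next
    show "e (pzero A) = pzero (power_alg (PL n) J)"
      unfolding power_alg_def e_def using gJ unfolding is_hom_def
      by (auto intro!: restrict_ext)
  next
    show "e (pone A) = pone (power_alg (PL n) J)"
      unfolding power_alg_def e_def using gJ unfolding is_hom_def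
      by (auto intro!: restrict_ext)
  next
    fix x y assume x: "x \<in> pcar A" and y: "y \<in> pcar A"
    show "e (pmeet A x y) = pmeet (power_alg (PL n) J) (e x) (e y)"
      unfolding power_alg_def e_def using gJ x y unfolding is_hom_def
      by (auto intro!: restrict_ext)
    show "e (pjoin A x y) = pjoin (power_alg (PL n) J) (e x) (e y)"
      unfolding power_alg_def e_def using gJ x y unfolding is_hom_def
      by (auto intro!: restrict_ext)
    show "e (pmul A x y) = pmul (power_alg (PL n) J) (e x) (e y)"
      unfolding power_alg_def e_def using gJ x y unfolding is_hom_def
      by (auto intro!: restrict_ext)
    show "e (padd A x y) = padd (power_alg (PL n) J) (e x) (e y)"
      unfolding power_alg_def e_def using gJ x y unfolding is_hom_def
      by (auto intro!: restrict_ext)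
  qed
  moreover have "inj_on e (pcar A)"
  proof (rule inj_onI)
    fix x y assume x: "x \<in> pcar A" and y: "y \<in> pcar A" and exy: "e x = e y"
    show "x = y"
    proof (rule ccontr)
      assume "x \<noteq> y"
      then obtain g where g: "is_hom A (PL n) g" "g x \<noteq> g y" using separation[OF x y] by blast
      then have "g \<in> J" unfolding J_def by simp
      then have "e x g = g x" "e y g = g y" using eg by auto
      then show False using exy g(2) by simp
    qed
  qed
  ultimately show ?thesis unfolding in_ISP_PL_def by blast
qed



end
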